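(* If $f:D^n\to\mathbb R$ is $\alpha$-bisubmodular, then its Lovász extension coincides with its convex closure: $f^L(\mathbf x)=f^-(\mathbf x)$ for all $\mathbf x\in[-\alpha,1]^n$, where $f^-(\mathbf x)=\min\{\sum_{\mathbf a\in D^n}\lambda(\mathbf a)f(\mathbf a):\lambda\in\mathcal P(\mathbf x)\}$.
   Context: Fix $\alpha\in(0,1]$ and $D=\{-\alpha,0,1\}\subset\mathbb R$. Define the partial order $\preceq$ on $D$ by $0\preceq 1$, $0\preceq -\alpha$ (plus reflexivity), with $1$ and $-\alpha$ incomparable; extend it componentwise to $D^n$. Define $\wedge_0$ on $D$ by $1\wedge_0(-\alpha)=(-\alpha)\wedge_0 1=0$ and $x\wedge_0 y=\min(x,y)$ w.r.t. $\preceq$ if $\{x,y\}\ne\{-\alpha,1\}$; for $a\in D$ define $\vee_a$ by $1\vee_a(-\alpha)=(-\alpha)\vee_a 1=a$ and $x\vee_a y=\max(x,y)$ w.r.t. $\preceq$ if $\{x,y\}\ne\{-\alpha,1\}$; extend componentwise to $D^n$. $f:D^n\to\mathbb R$ is $\alpha$-bisubmodular if for all $\mathbf a,\mathbf b\in D^n$: $f(\mathbf a\wedge_0\mathbf b)+\alpha f(\mathbf a\vee_0\mathbf b)+(1-\alpha)f(\mathbf a\vee_1\mathbf b)\le f(\mathbf a)+f(\mathbf b)$. For $\mathbf x\in[-\alpha,1]^n$, $\mathcal P(\mathbf x)$ is the set of $\lambda:D^n\to[0,1]$ with $\sum_{\mathbf a}\lambda(\mathbf a)=1$ and $\sum_{\mathbf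 a}\lambda(\mathbf a)\mathbf a=\mathbf x$. For each $\mathbf x$ there is a unique $\lambda_{\mathbf x}\in\mathcal P(\mathbf x)$ whose support is a chain w.r.t. $\preceq$; the Lovász extension is $f^L(\mathbf x)=\sum_{\mathbf a\in D^n}\lambda_{\mathbf x}(\mathbf a)f(\mathbf a)$. *)

theory Defs
  imports Complex_Main
begin

definition Dset :: "real \<Rightarrow> real set" where
  "Dset \<alpha> = {-\<alpha>, 0, 1}"

definition DD :: "real \<Rightarrow> ('n::finite \<Rightarrow> real) set" where
  "DD \<alpha> = {a. \<forall>i. a i \<in> Dset \<alpha>}"

definition leqD :: "real \<Rightarrow> real \<Rightarrow> real \<Rightarrow> bool" where
  "leqD \<alpha> x y \<longleftrightarrow> x = y \<or> (x = 0 \<and> (y = 1 \<or> y = -\<alpha>))"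

definition leqV :: "real \<Rightarrow> ('n::finite \<Rightarrow> real) \<Rightarrow> ('n \<Rightarrow> real) \<Rightarrow> bool" where
  "leqV \<alpha> a b \<longleftrightarrow> (\<forall>i. leqD \<alpha> (a i) (b i))"

definition meet0 :: "real \<Rightarrow> real \<Rightarrow> real \<Rightarrow> real" where
  "meet0 \<alpha> x y = (if {x, y} = {-\<alpha>, 1} then 0
                   else if leqD \<alpha> x y then x else y)"

definition joinD :: "real \<Rightarrow> real \<Rightarrow> real \<Rightarrow> real \<Rightarrow> real" where
  "joinD \<alpha> c x y = (if {x, y} = {-\<alpha>, 1} then c
                     else if leqD \<alpha> x y then y else x)"

definition bisubmodular :: "real \<Rightarrow> (('n::finite \<Rightarrow> real) \<Rightarrow> real) \<Rightarrow> bool" where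
  "bisubmodular \<alpha> f \<longleftrightarrow>
     (\<forall>a\<in>DD \<alpha>. \<forall>b\<in>DD \<alpha>.
        f (\<lambda>i. meet0 \<alpha> (a i) (b i)) + \<alpha> * f (\<lambda>i. joinD \<alpha> 0 (a i) (b i))
          + (1 - \<alpha>) * f (\<lambda>i. joinD \<alpha> 1 (a i) (b i)) \<le> f a + f b)"

definition Pdist :: "real \<Rightarrow> ('n::finite \<Rightarrow> real) \<Rightarrow> (('n \<Rightarrow> real) \<Rightarrow> real) set" where
  "Pdist \<alpha> x = {p. (\<forall>a. 0 \<le> p a \<and> p a \<le> 1) \<and> (\<forall>a. a \<notin> DD \<alpha> \<longrightarrow> p a = 0)
                 \<and> (\<Sum>a\<in>DD \<alpha>. p a) = 1
                 \<and> (\<forall>i. (\<Sum>a\<in>DD \<alpha>. p a * a i) = x i)}"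

definition chain_support :: "real \<Rightarrow> (('n::finite \<Rightarrow> real) \<Rightarrow> real) \<Rightarrow> bool" where
  "chain_support \<alpha> p \<longleftrightarrow>
     (\<forall>a\<in>DD \<alpha>. \<forall>b\<in>DD \<alpha>. p a \<noteq> 0 \<longrightarrow> p b \<noteq> 0 \<longrightarrow> leqV \<alpha> a b \<or> leqV \<alpha> b a)"

text \<open>The unique distribution in P(x) with chain support.\<close>
definition lambda_chain :: "real \<Rightarrow> ('n::finite \<Rightarrow> real) \<Rightarrow> (('n \<Rightarrow> real) \<Rightarrow> real)" where
  "lambda_chain \<alpha> x = (THE p. p \<in> Pdist \<alpha> x \<and> chain_support \<alpha> p)"

definition lovasz_ext :: "real \<Rightarrow> (('n::finite \<Rightarrow> real) \<Rightarrow> real) \<Rightarrow> ('n \<Rightarrow> real) \<Rightarrow> real" where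
  "lovasz_ext \<alpha> f x = (\<Sum>a\<in>DD \<alpha>. lambda_chain \<alpha> x a * f a)"

definition convex_closure :: "real \<Rightarrow> (('n::finite \<Rightarrow> real) \<Rightarrow> real) \<Rightarrow> ('n \<Rightarrow> real) \<Rightarrow> real" where
  "convex_closure \<alpha> f x = Inf {(\<Sum>a\<in>DD \<alpha>. p a * f a) | p. p \<in> Pdist \<alpha> x}"

end

theory Submission imports Defs "HOL-Library.FuncSet" begin

lemma sort_exists:
  fixes u :: "'n::finite \<Rightarrow> real"
  shows "\<exists>r. bij_betw r UNIV {..<card (UNIV::'n set)} \<and> (\<forall>i j. u j < u i \<longrightarrow> r i < r j)"
proof -
  obtain xs :: "'n list" where xs: "set xs = UNIV" "distinct xs"
    using finite_distinct_list[of "UNIV::'n set"] by auto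
  define ys where "ys = sort_key (\<lambda>i. - u i) xs"
  have ys: "set ys = UNIV" "distinct ys" "sorted (map (\<lambda>i. - u i) ys)"
    using xs by (auto simp: ys_def)
  have len: "length ys = card (UNIV::'n set)"
    using ys distinct_card by fastforce
  have b: "bij_betw ((!) ys) {..<card (UNIV::'n set)} UNIV"
    by (rule bij_betw_nth) (use ys len in auto)
  define r where "r = inv_into {..<card (UNIV::'n set)} ((!) ys)"
  have rb: "bij_betw r UNIV {..<card (UNIV::'n set)}"
    unfolding r_def by (rule bij_betw_inv_into[OF b])
  have nr: "ys ! (r i) = i" for i
    unfolding r_def using b by (simp add: bij_betw_def f_inv_into_f)
  have rl: "r i < length ys" for i using rb len by (auto simp: bij_betw_def)
  have "r i < r j" if "u j < u i" for i j
  proof (rule ccontr)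
    assume "\<not> r i < r j"
    then have "r j \<le> r i" by simp
    then have "(map (\<lambda>i. - u i) ys) ! (r j) \<le> (map (\<lambda>i. - u i) ys) ! (r i)"
      using ys(3) rl by (intro sorted_nth_mono) auto
    then show False using that nr rl by simp
  qed
  then show ?thesis using rb by blast
qed

lemma dpair: "0 < \<alpha> \<Longrightarrow> ({x, y} = {-\<alpha>, (1::real)}) \<longleftrightarrow> (x = -\<alpha> \<and> y = 1) \<or> (x = 1 \<and> y = -\<alpha>)"
  by (auto simp: doubleton_eq_iff)

lemma lin_coord:
  assumes "0 < \<alpha>" "x \<in> Dset \<alpha>" "y \<in> Dset \<alpha>"
  shows "meet0 \<alpha> x y + \<alpha> * joinD \<alpha> 0 x y + (1-\<alpha>) * joinD \<alpha> 1 x y = x + y"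
  using assms by (auto simp: Dset_def meet0_def joinD_def leqD_def dpair algebra_simps)

lemma cons_coord:
  assumes "0 < \<alpha>" "x \<in> Dset \<alpha>" "s = 1 \<or> s = -\<alpha>"
  shows "meet0 \<alpha> x s \<in> {0, s}" "joinD \<alpha> 0 x s \<in> {0, s}"
    "joinD \<alpha> 1 (joinD \<alpha> 1 x s) s = joinD \<alpha> 1 x s"
    "joinD \<alpha> 1 x s \<in> Dset \<alpha>"
  using assms by (auto simp: Dset_def meet0_def joinD_def leqD_def dpair)

lemma finite_DD: "finite (DD \<alpha> :: ('n::finite \<Rightarrow> real) set)"
proof -
  have "DD \<alpha> = (PiE (UNIV::'n set) (\<lambda>_. Dset \<alpha>))"
    by (auto simp: DD_def PiE_def Pi_def)
  moreover have "finite (Dset \<alpha>)" by (simp add: Dset_def)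
  ultimately show ?thesis by (simp add: finite_PiE)
qed


lemma cc_coord:
  assumes "0 < \<alpha>" "s = 1 \<or> s = -\<alpha>" "v = 0 \<or> v = s"
  shows "meet0 \<alpha> v s = v" "joinD \<alpha> cc v s = s" "meet0 \<alpha> v 0 = 0" "joinD \<alpha> cc v 0 = v"
    "meet0 \<alpha> 0 v = 0" "joinD \<alpha> cc 0 v = v"
  using assms by (auto simp: meet0_def joinD_def leqD_def dpair)

definition sg :: "real \<Rightarrow> ('n \<Rightarrow> real) \<Rightarrow> 'n \<Rightarrow> real" where
  "sg \<alpha> x i = (if 0 \<le> x i then 1 else -\<alpha>)"
definition uu :: "real \<Rightarrow> ('n \<Rightarrow> real) \<Rightarrow> 'n \<Rightarrow> real" where
  "uu \<alpha> x i = x i / sg \<alpha> x i"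

definition e :: "'n \<Rightarrow> ('n \<Rightarrow> real) \<Rightarrow> real" where "e i b = (if b i = 0 then 0 else 1)"

locale LS =
  fixes \<alpha> :: real and x :: "'n::finite \<Rightarrow> real" and r :: "'n \<Rightarrow> nat" and N :: nat
  assumes apos: "0 < \<alpha>" and a1: "\<alpha> \<le> 1" and xb: "\<forall>i. -\<alpha> \<le> x i \<and> x i \<le> 1"
  and rbij: "bij_betw r UNIV {..<N}"
  and rsort: "\<forall>i j. uu \<alpha> x j < uu \<alpha> x i \<longrightarrow> r i < r j"
begin

abbreviation "s \<equiv> sg \<alpha> x"
abbreviation "u \<equiv> uu \<alpha> x"

definition c :: "nat \<Rightarrow> 'n \<Rightarrow> real" where "c k = (\<lambda>i. if r i < k then s i else 0)"
definition rinv where "rinv = inv_into UNIV r"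
definition t where "t m = (if m = 0 then 1 else if m \<le> N then u (rinv (m - 1)) else 0)"
definition w where "w k = t k - t (Suc k)"
definition lam where "lam a = (\<Sum>k\<le>N. if c k = a then w k else 0)"

lemma s_cases: "s i = 1 \<or> s i = -\<alpha>" by (simp add: sg_def)
lemma s_nz: "s i \<noteq> 0" using apos by (simp add: sg_def)
lemma s_D: "s i \<in> Dset \<alpha>" by (auto simp: sg_def Dset_def)
lemma u_bounds: "0 \<le> u i" "u i \<le> 1"
  using xb[rule_format, of i] apos by (auto simp: uu_def sg_def field_simps)
lemma x_eq: "x i = s i * u i" using s_nz[of i] by (simp add: uu_def)

lemma r_lt: "r i < N" using rbij by (auto simp: bij_betw_def)
lemma r_inj: "inj r" using rbij by (auto simp: bij_betw_def)
lemma r_rinv: "k < N \<Longrightarrow> r (rinv k) = k"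
  unfolding rinv_def using rbij by (auto simp: bij_betw_def intro: f_inv_into_f)
lemma rinv_r: "rinv (r i) = i" unfolding rinv_def using r_inj by simp

lemma c_DD: "c k \<in> DD \<alpha>" using s_D by (auto simp: c_def DD_def Dset_def)
lemma c0: "c 0 = (\<lambda>_. 0)" by (simp add: c_def)
lemma cN: "c N i = s i" using r_lt by (simp add: c_def)
lemma c_inj: "inj_on c {..N}"
proof (rule inj_onI)
  fix k k' assume k: "k \<in> {..N}" "k' \<in> {..N}" "c k = c k'"
  show "k = k'"
  proof (rule ccontr)
    assume "k \<noteq> k'"
    then consider "k < k'" | "k' < k" by linarith
    then show False
    proof cases
      case 1
      then have "k < N" using k by auto
      then have "c k (rinv k) = 0" "c k' (rinv k) = s (rinv k)" using r_rinv 1 by (auto simp: c_def)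
      then show False using k s_nz by metis
    next
      case 2
      then have "k' < N" using k by auto
      then have "c k' (rinv k') = 0" "c k (rinv k') = s (rinv k')" using r_rinv 2 by (auto simp: c_def)
      then show False using k s_nz by metis
    qed
  qed
qed

lemma c_mono: "k \<le> k' \<Longrightarrow> leqV \<alpha> (c k) (c k')"
  using s_cases by (auto simp: leqV_def leqD_def c_def)

lemma t_bounds: "0 \<le> t m" "t m \<le> 1" using u_bounds by (auto simp: t_def)
lemma t_mono: "t (Suc k) \<le> t k"
proof -
  consider "k = 0" | "0 < k" "k < N" | "k \<ge> N" by linarith
  then show ?thesis
  proof cases
    case 1 then show ?thesis using u_bounds by (simp add: t_def)
  next
    case 2
    have "\<not> u (rinv (k-1)) < u (rinv k)"
    proof
      assume "u (rinv (k-1)) < u (rinv k)"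
      then have "r (rinv k) < r (rinv (k-1))" using rsort by blast
      then show False using r_rinv 2 by simp
    qed
    then show ?thesis using 2 by (simp add: t_def)
  next
    case 3 then show ?thesis using u_bounds by (auto simp: t_def)
  qed
qed
lemma w_nonneg: "0 \<le> w k" using t_mono by (simp add: w_def)
lemma w_le1: "w k \<le> 1" using t_bounds[of k] t_bounds[of "Suc k"] by (simp add: w_def)
lemma t_Suc_r: "t (Suc (r i)) = u i" using r_lt[of i] rinv_r by (simp add: t_def)
lemma t_SucN: "t (Suc N) = 0" by (simp add: t_def)
lemma t0: "t 0 = 1" by (simp add: t_def)

lemma sum_chain:
  fixes p F :: "('n \<Rightarrow> real) \<Rightarrow> real"
  assumes "\<forall>a. a \<notin> c ` {..N} \<longrightarrow> p a = 0"
  shows "(\<Sum>a\<in>DD \<alpha>. p a * F a) = (\<Sum>k\<le>N. p (c k) * F (c k))"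
proof -
  have "(\<Sum>a\<in>DD \<alpha>. p a * F a) = (\<Sum>a\<in>c ` {..N}. p a * F a)"
    by (rule sum.mono_neutral_right) (use finite_DD c_DD assms in auto)
  also have "\<dots> = (\<Sum>k\<le>N. p (c k) * F (c k))"
    by (subst sum.reindex[OF c_inj]) simp
  finally show ?thesis .
qed

lemma lam_c: "k \<le> N \<Longrightarrow> lam (c k) = w k"
proof -
  assume k: "k \<le> N"
  have "lam (c k) = (\<Sum>j\<le>N. if j = k then w k else 0)"
    unfolding lam_def
    by (rule sum.cong) (use c_inj k in \<open>auto dest: inj_onD\<close>)
  then show ?thesis using k by simp
qed
lemma lam_off: "a \<notin> c ` {..N} \<Longrightarrow> lam a = 0"
  unfolding lam_def by (rule sum.neutral) auto

lemma sum_w: "(\<Sum>k\<le>N. w k) = 1"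
  using sum_lessThan_telescope'[of t "Suc N"] t0 t_SucN
  by (simp add: w_def lessThan_Suc_atMost)

lemma coord_sum: "(\<Sum>k\<le>N. q k * c k i) = s i * (\<Sum>k\<in>{Suc (r i)..N}. q k)"
proof -
  have "(\<Sum>k\<le>N. q k * c k i) = (\<Sum>k\<in>{..N}. if k \<in> {k. r i < k} then q k * s i else 0)"
    by (rule sum.cong) (auto simp: c_def)
  also have "\<dots> = (\<Sum>k\<in>{..N} \<inter> {k. r i < k}. q k * s i)"
    by (simp add: sum.inter_restrict)
  also have "{..N} \<inter> {k. r i < k} = {Suc (r i)..N}" by auto
  finally show ?thesis by (simp add: sum_distrib_left mult.commute)
qed

lemma telesc: "m \<le> Suc N \<Longrightarrow> (\<Sum>k\<in>{m..N}. w k) = t m - t (Suc N)"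
  using sum_Suc_diff[of m N "\<lambda>k. - t k"] by (simp add: w_def)

lemma lam_Pdist: "lam \<in> Pdist \<alpha> x"
proof -
  have off: "\<forall>a. a \<notin> c ` {..N} \<longrightarrow> lam a = 0" using lam_off by blast
  have nn: "0 \<le> lam a" for a unfolding lam_def by (rule sum_nonneg) (use w_nonneg in auto)
  have le: "lam a \<le> 1" for a
  proof -
    have "lam a \<le> (\<Sum>k\<le>N. w k)" unfolding lam_def
      by (rule sum_mono) (use w_nonneg in auto)
    then show ?thesis using sum_w by simp
  qed
  have dd: "a \<notin> DD \<alpha> \<Longrightarrow> lam a = 0" for a using lam_off c_DD by (metis image_iff)
  have s1: "(\<Sum>a\<in>DD \<alpha>. lam a) = 1"
    using sum_chain[OF off, of "\<lambda>_. 1"] lam_c sum_w by simp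
  have m: "(\<Sum>a\<in>DD \<alpha>. lam a * a i) = x i" for i
  proof -
    have "(\<Sum>a\<in>DD \<alpha>. lam a * a i) = (\<Sum>k\<le>N. w k * c k i)"
      using sum_chain[OF off, of "\<lambda>a. a i"] lam_c by simp
    also have "\<dots> = s i * (t (Suc (r i)) - t (Suc N))"
      using coord_sum telesc[of "Suc (r i)"] r_lt[of i] by simp
    also have "\<dots> = x i" using t_Suc_r t_SucN x_eq by simp
    finally show ?thesis .
  qed
  show ?thesis using nn le dd s1 m by (auto simp: Pdist_def)
qed

lemma lam_chain: "chain_support \<alpha> lam"
  unfolding chain_support_def
proof (intro ballI impI)
  fix a b assume "lam a \<noteq> 0" "lam b \<noteq> 0"
  then obtain k k' where "a = c k" "b = c k'" using lam_off by blast
  then show "leqV \<alpha> a b \<or> leqV \<alpha> b a" using c_mono nat_le_linear by metis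
qed


context
  fixes p :: "('n \<Rightarrow> real) \<Rightarrow> real"
  assumes pP: "p \<in> Pdist \<alpha> x" and pC: "chain_support \<alpha> p"
begin

lemma p_nn: "0 \<le> p a" using pP by (simp add: Pdist_def)
lemma p_off: "a \<notin> DD \<alpha> \<Longrightarrow> p a = 0" using pP by (simp add: Pdist_def)
lemma p_sum: "(\<Sum>a\<in>DD \<alpha>. p a) = 1" using pP by (simp add: Pdist_def)
lemma p_mean: "(\<Sum>a\<in>DD \<alpha>. p a * a i) = x i" using pP by (simp add: Pdist_def)

lemma comp_coord:
  assumes "a \<in> DD \<alpha>" "b \<in> DD \<alpha>" "p a \<noteq> 0" "p b \<noteq> 0" "a i \<noteq> 0"
  shows "b i = 0 \<or> b i = a i"
proof -
  have "leqV \<alpha> a b \<or> leqV \<alpha> b a" using pC assms unfolding chain_support_def by blast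
  then have "leqD \<alpha> (a i) (b i) \<or> leqD \<alpha> (b i) (a i)" by (auto simp: leqV_def)
  then show ?thesis using assms(5) by (auto simp: leqD_def)
qed

lemma U1: assumes "a \<in> DD \<alpha>" "p a \<noteq> 0" shows "a i = 0 \<or> a i = s i"
proof (rule ccontr)
  assume H: "\<not> (a i = 0 \<or> a i = s i)"
  have aD: "a i = 1 \<or> a i = -\<alpha>" using assms(1) H by (auto simp: DD_def Dset_def)
  have bb: "b i = 0 \<or> b i = a i" if "b \<in> DD \<alpha>" "p b \<noteq> 0" for b :: "'n \<Rightarrow> real"
    using comp_coord[OF assms(1) that(1) assms(2) that(2)] H by blast
  show False
  proof (cases "a i = 1")
    case True
    then have "s i = -\<alpha>" using H s_cases by metis
    then have xn: "x i < 0" using apos by (auto simp: sg_def split: if_splits)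
    have "0 \<le> (\<Sum>b\<in>DD \<alpha>. p b * b i)"
    proof (rule sum_nonneg)
      fix b :: "'n \<Rightarrow> real" assume "b \<in> DD \<alpha>"
      then show "0 \<le> p b * b i" using bb[of b] True p_nn[of b] by (cases "p b = 0") auto
    qed
    then show False using p_mean xn by simp
  next
    case False
    then have ai: "a i = -\<alpha>" using aD by simp
    then have "s i = 1" using H s_cases by metis
    then have xn: "0 \<le> x i" using apos by (auto simp: sg_def split: if_splits)
    have "(\<Sum>b\<in>DD \<alpha>. p b * b i) < sum (\<lambda>_. 0) (DD \<alpha> :: ('n \<Rightarrow> real) set)"
    proof (rule sum_strict_mono_ex1)
      show "finite (DD \<alpha>)" by (rule finite_DD)
      show "\<forall>b\<in>DD \<alpha>. p b * b i \<le> 0"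
      proof
        fix b :: "'n \<Rightarrow> real" assume "b \<in> DD \<alpha>"
        then show "p b * b i \<le> 0" using bb[of b] ai p_nn[of b] apos
          by (cases "p b = 0") (auto simp: mult_nonneg_nonpos)
      qed
      have "0 < p a" using p_nn[of a] assms(2) by simp
      then show "\<exists>b\<in>DD \<alpha>. p b * b i < 0" using assms(1) ai apos
        by (intro bexI[of _ a]) (auto simp: mult_pos_neg)
    qed
    then show False using p_mean xn by simp
  qed
qed


lemma u_e: "u i = (\<Sum>b\<in>DD \<alpha>. p b * e i b)"
proof -
  have "(\<Sum>b\<in>DD \<alpha>. p b * b i) = (\<Sum>b\<in>DD \<alpha>. s i * (p b * e i b))"
  proof (rule sum.cong)
    fix b :: "'n \<Rightarrow> real" assume "b \<in> DD \<alpha>"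
    then show "p b * b i = s i * (p b * e i b)" using U1[of b i]
      by (cases "p b = 0") (auto simp: e_def)
  qed simp
  then have "x i = s i * (\<Sum>b\<in>DD \<alpha>. p b * e i b)" using p_mean by (simp add: sum_distrib_left)
  then show ?thesis using x_eq[of i] s_nz[of i] by simp
qed

lemma U2: assumes "a \<in> DD \<alpha>" "p a \<noteq> 0" "a i \<noteq> 0" "a j = 0" shows "r i < r j"
proof -
  have "(\<Sum>b\<in>DD \<alpha>. p b * e j b) < (\<Sum>b\<in>DD \<alpha>. p b * e i b)"
  proof (rule sum_strict_mono_ex1)
    show "finite (DD \<alpha>)" by (rule finite_DD)
    show "\<forall>b\<in>DD \<alpha>. p b * e j b \<le> p b * e i b"
    proof
      fix b :: "'n \<Rightarrow> real" assume b: "b \<in> DD \<alpha>"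
      show "p b * e j b \<le> p b * e i b"
      proof (cases "p b = 0")
        case False
        have "leqV \<alpha> a b \<or> leqV \<alpha> b a" using pC assms b False unfolding chain_support_def by blast
        then have "leqD \<alpha> (a i) (b i) \<or> leqD \<alpha> (b j) (a j)" by (auto simp: leqV_def)
        then have "b i \<noteq> 0 \<or> b j = 0" using assms apos by (auto simp: leqD_def)
        then show ?thesis using p_nn[of b] by (auto simp: e_def)
      qed simp
    qed
    have "0 < p a" using p_nn[of a] assms(2) by simp
    then show "\<exists>b\<in>DD \<alpha>. p b * e j b < p b * e i b" using assms
      by (intro bexI[of _ a]) (auto simp: e_def)
  qed
  then have "u j < u i" using u_e by simp
  then show ?thesis using rsort by blast
qed

lemma U3: assumes "a \<in> DD \<alpha>" "p a \<noteq> 0" shows "a \<in> c ` {..N}"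
proof -
  define S where "S = {i. a i \<noteq> 0}"
  define k where "k = (if S = UNIV then N else Min (r ` (- S)))"
  have kN: "k \<le> N"
  proof (cases "S = UNIV")
    case False
    then obtain j where "j \<in> - S" by auto
    then have "Min (r ` (- S)) \<le> r j" by (intro Min_le) auto
    then show ?thesis using r_lt[of j] False by (simp add: k_def)
  qed (simp add: k_def)
  have iff: "r i < k \<longleftrightarrow> i \<in> S" for i
  proof (cases "S = UNIV")
    case True then show ?thesis using r_lt by (simp add: k_def)
  next
    case False
    have fin: "finite (r ` (- S))" "r ` (- S) \<noteq> {}" using False by auto
    show ?thesis
    proof
      assume rk: "r i < k"
      show "i \<in> S"
      proof (rule ccontr)
        assume "i \<notin> S"
        then have "Min (r ` (- S)) \<le> r i" by (intro Min_le) auto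
        then show False using rk False by (simp add: k_def)
      qed
    next
      assume iS: "i \<in> S"
      have "\<forall>j\<in>r ` (- S). r i < j" using U2[OF assms] iS by (auto simp: S_def)
      then show "r i < k" using False fin Min_in by (auto simp: k_def)
    qed
  qed
  have "a = c k"
  proof
    fix i show "a i = c k i" using iff[of i] U1[OF assms, of i] by (auto simp: c_def S_def)
  qed
  then show ?thesis using kN by auto
qed

lemma U4: assumes "k \<le> N" shows "p (c k) = w k"
proof -
  have off: "\<forall>a. a \<notin> c ` {..N} \<longrightarrow> p a = 0" using U3 p_off by blast
  define T where "T m = (\<Sum>k\<in>{m..N}. p (c k))" for m
  have T1: "T (Suc (r i)) = t (Suc (r i))" for i
  proof -
    have "x i = (\<Sum>k\<le>N. p (c k) * c k i)" using sum_chain[OF off, of "\<lambda>a. a i"] p_mean by simp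
    also have "\<dots> = s i * T (Suc (r i))" by (simp add: coord_sum T_def)
    finally show ?thesis using x_eq[of i] s_nz[of i] t_Suc_r by simp
  qed
  have T0: "T 0 = t 0"
    using sum_chain[OF off, of "\<lambda>_. 1"] p_sum t0 by (simp add: T_def atLeast0AtMost)
  have TS: "T (Suc N) = t (Suc N)" using t_SucN by (simp add: T_def)
  have Tall: "T m = t m" if "m \<le> Suc N" for m
  proof -
    have "m = 0 \<or> m = Suc N \<or> (0 < m \<and> m \<le> N)" using that by linarith
    then consider "m = 0" | "m = Suc N" | "0 < m" "m \<le> N" by blast
    then show ?thesis
    proof cases
      case 3
      then have "m = Suc (r (rinv (m - 1)))" using r_rinv[of "m-1"] by simp
      then show ?thesis using T1 by metis
    qed (use T0 TS in auto)
  qed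
  have "T k = p (c k) + T (Suc k)" unfolding T_def using assms by (simp add: sum.atLeast_Suc_atMost)
  then show ?thesis using Tall[of k] Tall[of "Suc k"] assms by (simp add: w_def)
qed

lemma p_eq_lam: "p = lam"
proof
  fix a
  show "p a = lam a"
  proof (cases "a \<in> c ` {..N}")
    case True
    then obtain k where "k \<le> N" "a = c k" by auto
    then show ?thesis using U4 lam_c by simp
  next
    case False
    then have "p a = 0" using U3 p_off by blast
    then show ?thesis using lam_off False by simp
  qed
qed

end

lemma lambda_chain_eq: "lambda_chain \<alpha> x = lam"
  unfolding lambda_chain_def
proof (rule the_equality)
  show "lam \<in> Pdist \<alpha> x \<and> chain_support \<alpha> lam" using lam_Pdist lam_chain by blast
next
  fix p assume "p \<in> Pdist \<alpha> x \<and> chain_support \<alpha> p"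
  then show "p = lam" using p_eq_lam by blast
qed

end



locale LSf = LS \<alpha> x r N for \<alpha> :: real and x :: "'n::finite \<Rightarrow> real" and r N +
  fixes f :: "('n::finite \<Rightarrow> real) \<Rightarrow> real"
  assumes bis: "bisubmodular \<alpha> f"
begin

definition y where "y i = (f (c (Suc (r i))) - f (c (r i))) / s i"
definition lin :: "('n \<Rightarrow> real) \<Rightarrow> real" where "lin a = (\<Sum>i\<in>UNIV. y i * a i)"
definition g where "g a = f a - f (c 0) - lin a"

lemma M1: assumes "k \<le> N" shows "g (c k) = 0"
proof -
  define D where "D j = f (c (Suc j)) - f (c j)" for j
  have "lin (c k) = (\<Sum>i\<in>UNIV. if i \<in> {i. r i < k} then D (r i) else 0)"
    unfolding lin_def by (rule sum.cong) (auto simp: c_def y_def D_def s_nz)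
  also have "\<dots> = (\<Sum>i\<in>{i. r i < k}. D (r i))"
    using sum.inter_restrict[of UNIV "\<lambda>i. D (r i)" "{i. r i < k}"] by simp
  also have "\<dots> = (\<Sum>j\<in>r ` {i. r i < k}. D j)"
    using r_inj by (simp add: sum.reindex inj_on_def)
  also have "r ` {i. r i < k} = {..<k}"
  proof
    show "{..<k} \<subseteq> r ` {i. r i < k}"
    proof
      fix j assume "j \<in> {..<k}"
      then have "j < N" "j < k" using assms by auto
      then show "j \<in> r ` {i. r i < k}" using r_rinv by (intro image_eqI[of _ _ "rinv j"]) auto
    qed
  qed auto
  also have "(\<Sum>j<k. D j) = f (c k) - f (c 0)"
    unfolding D_def by (rule sum_lessThan_telescope)
  finally show ?thesis by (simp add: g_def)
qed

lemma lin_comb: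
  assumes "a \<in> DD \<alpha>" "b \<in> DD \<alpha>"
  shows "lin (\<lambda>i. meet0 \<alpha> (a i) (b i)) + \<alpha> * lin (\<lambda>i. joinD \<alpha> 0 (a i) (b i))
          + (1 - \<alpha>) * lin (\<lambda>i. joinD \<alpha> 1 (a i) (b i)) = lin a + lin b"
proof -
  have "lin (\<lambda>i. meet0 \<alpha> (a i) (b i)) + \<alpha> * lin (\<lambda>i. joinD \<alpha> 0 (a i) (b i))
          + (1 - \<alpha>) * lin (\<lambda>i. joinD \<alpha> 1 (a i) (b i))
     = (\<Sum>i\<in>UNIV. y i * (meet0 \<alpha> (a i) (b i) + \<alpha> * joinD \<alpha> 0 (a i) (b i) + (1-\<alpha>) * joinD \<alpha> 1 (a i) (b i)))"
    by (simp add: lin_def sum_distrib_left sum.distrib sum_subtractf algebra_simps)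
  also have "\<dots> = (\<Sum>i\<in>UNIV. y i * (a i + b i))"
    using assms lin_coord[OF apos] by (simp add: DD_def)
  also have "\<dots> = lin a + lin b" by (simp add: lin_def sum.distrib algebra_simps)
  finally show ?thesis .
qed

lemma Mg:
  assumes "a \<in> DD \<alpha>" "b \<in> DD \<alpha>"
  shows "g (\<lambda>i. meet0 \<alpha> (a i) (b i)) + \<alpha> * g (\<lambda>i. joinD \<alpha> 0 (a i) (b i))
          + (1 - \<alpha>) * g (\<lambda>i. joinD \<alpha> 1 (a i) (b i)) \<le> g a + g b"
proof -
  have "f (\<lambda>i. meet0 \<alpha> (a i) (b i)) + \<alpha> * f (\<lambda>i. joinD \<alpha> 0 (a i) (b i))
          + (1 - \<alpha>) * f (\<lambda>i. joinD \<alpha> 1 (a i) (b i)) \<le> f a + f b"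
    using bis assms unfolding bisubmodular_def by blast
  then show ?thesis using lin_comb[OF assms] by (simp add: g_def algebra_simps)
qed

definition cons :: "('n \<Rightarrow> real) \<Rightarrow> bool" where "cons a \<longleftrightarrow> (\<forall>i. a i = 0 \<or> a i = s i)"

lemma cons_DD: "cons a \<Longrightarrow> a \<in> DD \<alpha>"
  using s_D by (auto simp: cons_def DD_def Dset_def) (metis)

lemma M3n: "\<forall>a. cons a \<and> card {i. a i \<noteq> 0} = n \<longrightarrow> 0 \<le> g a"
proof (induction n)
  case 0
  show ?case
  proof (intro allI impI)
    fix a assume H: "cons a \<and> card {i. a i \<noteq> 0} = 0"
    then have "{i. a i \<noteq> 0} = {}" by simp
    then have "a = c 0" unfolding c0 by auto
    then show "0 \<le> g a" using M1[of 0] by simp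
  qed
next
  case (Suc n)
  show ?case
  proof (intro allI impI)
    fix a assume H: "cons a \<and> card {i. a i \<noteq> 0} = Suc n"
    define S where "S = {i. a i \<noteq> 0}"
    have Sne: "S \<noteq> {}" using H unfolding S_def by (metis card.empty nat.distinct(1))
    have "Max (r ` S) \<in> r ` S" using Sne by (intro Max_in) auto
    then obtain m where mS: "m \<in> S" and mM: "r m = Max (r ` S)" by auto
    have mx: "r i \<le> r m" if "i \<in> S" for i using that mM by (simp add: Max_ge)
    define a' where "a' = a(m := 0)"
    have cons': "cons a'" using H by (auto simp: cons_def a'_def)
    have "{i. a' i \<noteq> 0} = S - {m}" by (auto simp: a'_def S_def)
    then have "card {i. a' i \<noteq> 0} = n" using H mS by (simp add: S_def)
    then have g': "0 \<le> g a'" using Suc.IH cons' by blast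
    define k where "k = r m"
    have kN: "Suc k \<le> N" using r_lt[of m] by (simp add: k_def)
    have am: "a m = s m" using H mS by (auto simp: cons_def S_def)
    have rik: "r i < k" if "i \<in> S" "i \<noteq> m" for i
    proof -
      have "r i \<le> r m" using mx that(1) .
      moreover have "r i \<noteq> r m" using r_inj that(2) by (metis injD)
      ultimately show ?thesis by (simp add: k_def)
    qed
    have rk: "r i \<noteq> k" if "i \<noteq> m" for i using r_inj that by (metis injD k_def)
    have cc: "meet0 \<alpha> (a i) (c k i) = a' i \<and> joinD \<alpha> cc (a i) (c k i) = c (Suc k) i" for i cc
    proof (cases "i = m")
      case True
      then have "a i = s i" "c k i = 0" "a' i = 0" "c (Suc k) i = s i"
        using am by (auto simp: a'_def c_def k_def)
      then show ?thesis using cc_coord[OF apos s_cases, of "s i" i] by simp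
    next
      case False
      show ?thesis
      proof (cases "i \<in> S")
        case True
        then have "a i = s i" "c k i = s i" "a' i = s i" "c (Suc k) i = s i"
          using H rik[OF True False] False by (auto simp: a'_def c_def S_def cons_def)
        then show ?thesis using cc_coord[OF apos s_cases, of "s i" i] by simp
      next
        case F2: False
        have ck: "c k i = 0 \<or> c k i = s i" by (simp add: c_def)
        have "a i = 0" "a' i = 0" "c (Suc k) i = c k i"
          using F2 False rk[OF False] by (auto simp: a'_def c_def S_def)
        then show ?thesis using cc_coord(5,6)[OF apos s_cases ck] by simp
      qed
    qed
    have meq: "(\<lambda>i. meet0 \<alpha> (a i) (c k i)) = a'"
    proof
      fix i show "meet0 \<alpha> (a i) (c k i) = a' i" using cc[of i 0] by blast
    qed
    have jeq: "(\<lambda>i. joinD \<alpha> cc (a i) (c k i)) = c (Suc k)" for cc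
    proof
      fix i show "joinD \<alpha> cc (a i) (c k i) = c (Suc k) i" using cc[of i cc] by blast
    qed
    have "g (\<lambda>i. meet0 \<alpha> (a i) (c k i)) + \<alpha> * g (\<lambda>i. joinD \<alpha> 0 (a i) (c k i))
          + (1 - \<alpha>) * g (\<lambda>i. joinD \<alpha> 1 (a i) (c k i)) \<le> g a + g (c k)"
      using H by (intro Mg cons_DD c_DD) blast
    then have "g a' + \<alpha> * g (c (Suc k)) + (1 - \<alpha>) * g (c (Suc k)) \<le> g a + g (c k)"
      unfolding meq jeq .
    moreover have "g (c (Suc k)) = 0" "g (c k) = 0" using M1 kN by auto
    ultimately show "0 \<le> g a" using g' by (simp add: algebra_simps)
  qed
qed

lemma M3: "cons a \<Longrightarrow> 0 \<le> g a" using M3n[of "card {i. a i \<noteq> 0}"] by blast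

lemma M4: assumes "a \<in> DD \<alpha>" shows "0 \<le> g a"
proof -
  have sN: "c N = s" using cN by auto
  have aD: "a i \<in> Dset \<alpha>" for i using assms by (simp add: DD_def)
  define z where "z = (\<lambda>i. joinD \<alpha> 1 (a i) (s i))"
  have zD: "z \<in> DD \<alpha>" using cons_coord(4)[OF apos aD s_cases] by (simp add: z_def DD_def)
  have c1: "cons (\<lambda>i. meet0 \<alpha> (b i) (s i))" if "b \<in> DD \<alpha>" for b
    using cons_coord(1)[OF apos _ s_cases] that by (auto simp: cons_def DD_def)
  have c2: "cons (\<lambda>i. joinD \<alpha> 0 (b i) (s i))" if "b \<in> DD \<alpha>" for b
    using cons_coord(2)[OF apos _ s_cases] that by (auto simp: cons_def DD_def)
  have zz: "(\<lambda>i. joinD \<alpha> 1 (z i) (s i)) = z"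
    using cons_coord(3)[OF apos aD s_cases] by (simp add: z_def)
  have gN: "g s = 0" using M1[of N] sN by simp
  have "g (\<lambda>i. meet0 \<alpha> (z i) (s i)) + \<alpha> * g (\<lambda>i. joinD \<alpha> 0 (z i) (s i))
          + (1 - \<alpha>) * g z \<le> g z + g s"
    using Mg[OF zD c_DD, of N] sN zz by simp
  moreover have "0 \<le> g (\<lambda>i. meet0 \<alpha> (z i) (s i))" "0 \<le> g (\<lambda>i. joinD \<alpha> 0 (z i) (s i))"
    using M3[OF c1[OF zD]] M3[OF c2[OF zD]] by auto
  moreover have "0 \<le> \<alpha> * g (\<lambda>i. joinD \<alpha> 0 (z i) (s i))"
    using calculation(3) apos by simp
  ultimately have "\<alpha> * g z \<ge> 0" using gN by (simp add: algebra_simps)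
  then have gz: "0 \<le> g z" using apos by (simp add: zero_le_mult_iff)
  have "g (\<lambda>i. meet0 \<alpha> (a i) (s i)) + \<alpha> * g (\<lambda>i. joinD \<alpha> 0 (a i) (s i))
          + (1 - \<alpha>) * g z \<le> g a + g s"
    using Mg[OF assms c_DD, of N] sN by (simp add: z_def)
  moreover have "0 \<le> g (\<lambda>i. meet0 \<alpha> (a i) (s i))" "0 \<le> g (\<lambda>i. joinD \<alpha> 0 (a i) (s i))"
    using M3[OF c1[OF assms]] M3[OF c2[OF assms]] by auto
  moreover have "0 \<le> (1 - \<alpha>) * g z" using gz a1 by simp
  moreover have "0 \<le> \<alpha> * g (\<lambda>i. joinD \<alpha> 0 (a i) (s i))"
    using calculation(3) apos by simp
  ultimately show ?thesis using gN by linarith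
qed

lemma affine_sum:
  assumes "q \<in> Pdist \<alpha> x"
  shows "(\<Sum>a\<in>DD \<alpha>. q a * (f (c 0) + lin a)) = f (c 0) + lin x"
proof -
  have s1: "(\<Sum>a\<in>DD \<alpha>. q a) = 1" and m: "\<And>i. (\<Sum>a\<in>DD \<alpha>. q a * a i) = x i"
    using assms by (auto simp: Pdist_def)
  have "(\<Sum>a\<in>DD \<alpha>. q a * (f (c 0) + lin a)) = f (c 0) * (\<Sum>a\<in>DD \<alpha>. q a) + (\<Sum>a\<in>DD \<alpha>. \<Sum>i\<in>UNIV. y i * (q a * a i))"
    by (simp add: lin_def algebra_simps sum.distrib sum_distrib_left sum_distrib_right)
  also have "(\<Sum>a\<in>DD \<alpha>. \<Sum>i\<in>UNIV. y i * (q a * a i)) = (\<Sum>i\<in>UNIV. y i * (\<Sum>a\<in>DD \<alpha>. q a * a i))"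
    by (subst sum.swap) (simp add: sum_distrib_left)
  finally show ?thesis using s1 m by (simp add: lin_def)
qed

lemma M5: assumes "q \<in> Pdist \<alpha> x" shows "f (c 0) + lin x \<le> (\<Sum>a\<in>DD \<alpha>. q a * f a)"
proof -
  have "(\<Sum>a\<in>DD \<alpha>. q a * (f (c 0) + lin a)) \<le> (\<Sum>a\<in>DD \<alpha>. q a * f a)"
  proof (rule sum_mono)
    fix a :: "'n \<Rightarrow> real" assume "a \<in> DD \<alpha>"
    then have "0 \<le> g a" using M4 by blast
    then have "f (c 0) + lin a \<le> f a" by (simp add: g_def)
    moreover have "0 \<le> q a" using assms by (simp add: Pdist_def)
    ultimately show "q a * (f (c 0) + lin a) \<le> q a * f a" by (simp add: mult_left_mono)
  qed
  then show ?thesis using affine_sum[OF assms] by simp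
qed

lemma M6: "(\<Sum>a\<in>DD \<alpha>. lam a * f a) = f (c 0) + lin x"
proof -
  have "(\<Sum>a\<in>DD \<alpha>. lam a * f a) = (\<Sum>a\<in>DD \<alpha>. lam a * (f (c 0) + lin a))"
  proof (rule sum.cong)
    fix a :: "'n \<Rightarrow> real" assume "a \<in> DD \<alpha>"
    show "lam a * f a = lam a * (f (c 0) + lin a)"
    proof (cases "a \<in> c ` {..N}")
      case True
      then obtain k where "k \<le> N" "a = c k" by auto
      then have "g a = 0" using M1 by simp
      then show ?thesis by (simp add: g_def algebra_simps)
    qed (simp add: lam_off)
  qed simp
  then show ?thesis using affine_sum[OF lam_Pdist] by simp
qed

lemma final: "lovasz_ext \<alpha> f x = convex_closure \<alpha> f x"
proof -
  have L: "lovasz_ext \<alpha> f x = f (c 0) + lin x"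
    unfolding lovasz_ext_def lambda_chain_eq using M6 .
  have "Inf {(\<Sum>a\<in>DD \<alpha>. p a * f a) | p. p \<in> Pdist \<alpha> x} = f (c 0) + lin x"
  proof (rule cInf_eq_minimum)
    show "f (c 0) + lin x \<in> {(\<Sum>a\<in>DD \<alpha>. p a * f a) | p. p \<in> Pdist \<alpha> x}"
      by (rule CollectI, rule exI[of _ lam]) (simp add: M6 lam_Pdist)
  next
    fix v assume "v \<in> {(\<Sum>a\<in>DD \<alpha>. p a * f a) | p. p \<in> Pdist \<alpha> x}"
    then obtain q where "v = (\<Sum>a\<in>DD \<alpha>. q a * f a)" "q \<in> Pdist \<alpha> x" by blast
    then show "f (c 0) + lin x \<le> v" using M5 by simp
  qed
  then show ?thesis using L by (simp add: convex_closure_def)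
qed

end

theorem mainTheorem5:
  fixes \<alpha> :: real and f :: "('n::finite \<Rightarrow> real) \<Rightarrow> real" and x :: "'n \<Rightarrow> real"
  assumes "0 < \<alpha>" and "\<alpha> \<le> 1"
    and "bisubmodular \<alpha> f"
    and "\<forall>i. -\<alpha> \<le> x i \<and> x i \<le> 1"
  shows "lovasz_ext \<alpha> f x = convex_closure \<alpha> f x"
proof -
  obtain r where r: "bij_betw r UNIV {..<card (UNIV::'n set)}" "\<forall>i j. uu \<alpha> x j < uu \<alpha> x i \<longrightarrow> r i < r j"
    using sort_exists by blast
  interpret LSf \<alpha> x r "card (UNIV::'n set)" f
  proof unfold_locales
    show "0 < \<alpha>" by (rule assms(1))
    show "\<alpha> \<le> 1" by (rule assms(2))
    show "\<forall>i. -\<alpha> \<le> x i \<and> x i \<le> 1" by (rule assms(4))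
    show "bij_betw r UNIV {..<card (UNIV::'n set)}" by (rule r(1))
    show "\<forall>i j. uu \<alpha> x j < uu \<alpha> x i \<longrightarrow> r i < r j" by (rule r(2))
    show "bisubmodular \<alpha> f" by (rule assms(3))
  qed
  show ?thesis by (rule final)
qed

end
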